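(* Let $M$ be a matroid, $\psi\colon E(M)\to\Gamma$ a labeling to an abelian group $\Gamma$, and $w\colon E(M)\to\mathbb{R}$ a weight function. Suppose $M$ has at least one non-zero basis. Then for every minimum-weight basis $B$ of $M$ there exists a non-zero basis $B^*$ of $M$ that has minimum weight among all non-zero bases and satisfies $|B\setminus B^*|\le 1$.
   Context: For $S\subseteq E$, $\psi(S):=\sum_{x\in S}\psi(x)$ and $w(S):=\sum_{x\in S}w(x)$. A set $S$ is non-zero if $\psi(S)\neq 0$. *)

theory Defs
  imports Complex_Main
begin

definition matroid :: "'a set \<Rightarrow> ('a set \<Rightarrow> bool) \<Rightarrow> bool" where
  "matroid E indep \<longleftrightarrow>
     finite E \<and>
     indep {} \<and>
     (\<forall>X. indep X \<longrightarrow> X \<subseteq> E) \<and>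
     (\<forall>X Y. indep X \<and> Y \<subseteq> X \<longrightarrow> indep Y) \<and>
     (\<forall>X Y. indep X \<and> indep Y \<and> card X < card Y \<longrightarrow>
        (\<exists>y \<in> Y - X. indep (insert y X)))"

definition basis :: "('a set \<Rightarrow> bool) \<Rightarrow> 'a set \<Rightarrow> bool" where
  "basis indep B \<longleftrightarrow> indep B \<and> (\<forall>X. indep X \<and> B \<subseteq> X \<longrightarrow> X = B)"

definition nonzero :: "('a \<Rightarrow> 'g::ab_group_add) \<Rightarrow> 'a set \<Rightarrow> bool" where
  "nonzero \<psi> S \<longleftrightarrow> (\<Sum>x\<in>S. \<psi> x) \<noteq> 0"

end

theory Submission
  imports Defs
begin

lemma m_indep_sub: "matroid E indep \<Longrightarrow> indep X \<Longrightarrow> X \<subseteq> E"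
  unfolding matroid_def by blast

lemma m_indep_fin: "matroid E indep \<Longrightarrow> indep X \<Longrightarrow> finite X"
  unfolding matroid_def by (meson rev_finite_subset)

lemma m_indep_mono: "matroid E indep \<Longrightarrow> indep X \<Longrightarrow> Y \<subseteq> X \<Longrightarrow> indep Y"
  unfolding matroid_def by blast

lemma m_aug: "matroid E indep \<Longrightarrow> indep X \<Longrightarrow> indep Y \<Longrightarrow> card X < card Y
   \<Longrightarrow> \<exists>y \<in> Y - X. indep (insert y X)"
  unfolding matroid_def by blast

lemma aug_iter:
  assumes M: "matroid E indep"
  shows "\<And>I. n = card J - card I \<Longrightarrow> indep I \<Longrightarrow> indep J \<Longrightarrow> card I \<le> card J \<Longrightarrow>
     \<exists>I'. I \<subseteq> I' \<and> I' \<subseteq> I \<union> J \<and> indep I' \<and> card I' = card J"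
proof (induction n)
  case 0
  then show ?case by (intro exI[of _ I]) auto
next
  case (Suc n)
  then have "card I < card J" by auto
  then obtain y where y: "y \<in> J - I" "indep (insert y I)" using m_aug[OF M] Suc by blast
  have fI: "finite I" using m_indep_fin[OF M] Suc by blast
  have c: "card (insert y I) = card I + 1" using y fI by simp
  have "\<exists>I'. insert y I \<subseteq> I' \<and> I' \<subseteq> insert y I \<union> J \<and> indep I' \<and> card I' = card J"
    using Suc.IH[of "insert y I"] Suc.prems c y \<open>card I < card J\<close> by auto
  then show ?case using y by blast
qed

lemma aug_iter':
  assumes M: "matroid E indep" "indep I" "indep J" "card I \<le> card J"
  shows "\<exists>I'. I \<subseteq> I' \<and> I' \<subseteq> I \<union> J \<and> indep I' \<and> card I' = card J"
  using aug_iter[OF M(1)] M by blast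

lemma basis_card_le:
  assumes M: "matroid E indep" and B: "basis indep B" and X: "indep X"
  shows "card X \<le> card B"
proof (rule ccontr)
  assume "\<not> ?thesis"
  then obtain y where y: "y \<in> X - B" "indep (insert y B)"
    using m_aug[OF M] B X unfolding basis_def by (meson not_le)
  then have "insert y B = B" using B unfolding basis_def by blast
  then show False using y by blast
qed

lemma basis_if_card:
  assumes M: "matroid E indep" and B: "basis indep B" and X: "indep X" and c: "card X = card B"
  shows "basis indep X"
  unfolding basis_def
proof (intro conjI allI impI)
  show "indep X" by fact
  fix Z assume Z: "indep Z \<and> X \<subseteq> Z"
  have "card Z \<le> card X" using basis_card_le[OF M B] Z c by simp
  moreover have "finite Z" using m_indep_fin[OF M] Z by blast
  ultimately show "Z = X" using Z by (metis card_seteq)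
qed

lemma closure_bound:
  assumes M: "matroid E indep" and I: "indep I"
    and S: "\<forall>e\<in>S. e \<notin> I \<longrightarrow> \<not> indep (insert e I)"
    and J: "indep J" "J \<subseteq> I \<union> S"
  shows "card J \<le> card I"
proof (rule ccontr)
  assume "\<not> ?thesis"
  then obtain y where y: "y \<in> J - I" "indep (insert y I)"
    using m_aug[OF M I J(1)] by (meson not_le)
  then show False using S J by blast
qed

lemma sym_exchange:
  assumes M: "matroid E indep" and X: "basis indep X" and Y: "basis indep Y"
    and x: "x \<in> X" "x \<notin> Y"
  shows "\<exists>y \<in> Y - X. basis indep (insert y (X - {x})) \<and> basis indep (insert x (Y - {y}))"
proof -
  have iX: "indep X" and iY: "indep Y" using X Y unfolding basis_def by auto
  have fX: "finite X" and fY: "finite Y" using m_indep_fin[OF M] iX iY by auto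
  define X' where "X' = X - {x}"
  define T where "T = {y\<in>Y-X. indep (insert y X')}"
  define K where "K = Y - T"
  have iX': "indep X'" using m_indep_mono[OF M iX] X'_def by blast
  have iK: "indep K" using m_indep_mono[OF M iY] K_def by blast
  have cX': "card X' = card X - 1" using X'_def x fX by simp
  have Kcl: "\<forall>e\<in>K. e \<notin> X' \<longrightarrow> \<not> indep (insert e X')"
    using x unfolding K_def T_def X'_def by blast
  have bound: "\<And>J. indep J \<Longrightarrow> J \<subseteq> X' \<union> K \<Longrightarrow> card J \<le> card X'"
    using closure_bound[OF M iX' Kcl] by blast
  have ixK: "indep (insert x K)"
  proof (rule ccontr)
    assume dep: "\<not> indep (insert x K)"
    have "card K \<le> card X'" using bound[OF iK] by blast
    then obtain I' where I': "K \<subseteq> I'" "I' \<subseteq> K \<union> X'" "indep I'" "card I' = card X'"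
      using aug_iter'[OF M iK iX'] by blast
    have fI': "finite I'" using m_indep_fin[OF M] I' by blast
    have cl: "\<forall>e\<in>insert x (K \<union> X'). e \<notin> I' \<longrightarrow> \<not> indep (insert e I')"
    proof (intro ballI impI)
      fix e assume e: "e \<in> insert x (K \<union> X')" "e \<notin> I'"
      show "\<not> indep (insert e I')"
      proof (cases "e = x")
        case True
        then show ?thesis using dep m_indep_mono[OF M, of "insert e I'" "insert x K"] I'(1) by blast
      next
        case False
        show ?thesis
        proof
          assume ie: "indep (insert e I')"
          have "card (insert e I') \<le> card X'" using bound[OF ie] e False I'(2) by blast
          then show False using e fI' I'(4) by simp
        qed
      qed
    qed
    have "X \<subseteq> I' \<union> insert x (K \<union> X')" using X'_def by blast
    then have "card X \<le> card I'" using closure_bound[OF M I'(3) cl iX] by blast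
    then show False using I'(4) cX' x fX by (metis One_nat_def card_gt_0_iff diff_less empty_iff less_one not_le)
  qed
  have xK: "x \<notin> K" using x K_def by blast
  have "card (insert x K) \<le> card Y" using basis_card_le[OF M Y ixK] .
  then obtain I'' where I'': "insert x K \<subseteq> I''" "I'' \<subseteq> insert x K \<union> Y" "indep I''" "card I'' = card Y"
    using aug_iter'[OF M ixK iY] by blast
  have fI'': "finite I''" using m_indep_fin[OF M] I'' by blast
  have "\<not> Y \<subseteq> I''"
  proof
    assume "Y \<subseteq> I''"
    then have "insert x Y \<subseteq> I''" using I'' by blast
    then have "card (insert x Y) \<le> card I''" using fI'' card_mono by blast
    then show False using x fY I''(4) by simp
  qed
  then obtain y where y: "y \<in> Y" "y \<notin> I''" by blast
  have yT: "y \<in> T" using y I''(1) K_def by blast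
  have sub: "I'' \<subseteq> insert x (Y - {y})" using I''(2) y K_def by blast
  have "card (insert x (Y - {y})) = card Y" using x y fY
    by (simp add: card_Diff_singleton) (metis One_nat_def Suc_pred card_gt_0_iff empty_iff)
  then have eq: "I'' = insert x (Y - {y})" using sub I''(4) fY
    by (metis card_subset_eq finite.insertI finite_Diff)
  have b1: "basis indep (insert x (Y - {y}))" using basis_if_card[OF M Y] I'' eq by simp
  have yT': "y \<in> Y - X" "indep (insert y X')" using yT T_def by auto
  have "card (insert y X') = card X" using yT' cX' fX x X'_def
    by (simp add: card_gt_0_iff) (metis One_nat_def Suc_pred card_gt_0_iff empty_iff)
  then have b2: "basis indep (insert y (X - {x}))" using basis_if_card[OF M X] yT' X'_def by simp
  show ?thesis using b1 b2 yT' by blast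
qed

theorem lemma3p2:
  fixes E :: "'a set" and indep :: "'a set \<Rightarrow> bool"
    and \<psi> :: "'a \<Rightarrow> 'g::ab_group_add" and w :: "'a \<Rightarrow> real"
  assumes "matroid E indep"
    and "\<exists>B0. basis indep B0 \<and> nonzero \<psi> B0"
    and "basis indep B"
    and "\<forall>B'. basis indep B' \<longrightarrow> (\<Sum>x\<in>B. w x) \<le> (\<Sum>x\<in>B'. w x)"
  shows "\<exists>Bs. basis indep Bs \<and> nonzero \<psi> Bs \<and>
           (\<forall>B'. basis indep B' \<and> nonzero \<psi> B' \<longrightarrow> (\<Sum>x\<in>Bs. w x) \<le> (\<Sum>x\<in>B'. w x)) \<and>
           card (B - Bs) \<le> 1"
proof -
  note M = assms(1)
  define NZ where "NZ = {X. basis indep X \<and> nonzero \<psi> X}"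
  have "NZ \<subseteq> Pow E" unfolding NZ_def basis_def using m_indep_sub[OF M] by blast
  moreover have "finite E" using M unfolding matroid_def by blast
  ultimately have fNZ: "finite NZ" by (meson finite_Pow_iff finite_subset)
  have neNZ: "NZ \<noteq> {}" using assms(2) NZ_def by blast
  define m where "m = Min ((\<lambda>X. sum w X) ` NZ)"
  have mle: "\<And>X. X \<in> NZ \<Longrightarrow> m \<le> sum w X" unfolding m_def using fNZ by simp
  have "m \<in> (\<lambda>X. sum w X) ` NZ" unfolding m_def using fNZ neNZ by simp
  then obtain B1 where B1: "B1 \<in> NZ" "sum w B1 = m" by blast
  define OPT where "OPT X \<longleftrightarrow> X \<in> NZ \<and> sum w X = m" for X
  obtain Bs where Bs: "OPT Bs" and Bsmin: "\<forall>Y. OPT Y \<longrightarrow> card (B - Bs) \<le> card (B - Y)"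
    using ex_has_least_nat[of OPT B1 "\<lambda>X. card (B - X)"] B1 OPT_def by blast
  have good: "\<And>Z. sum w Z \<le> m \<Longrightarrow> (\<forall>B'. basis indep B' \<and> nonzero \<psi> B' \<longrightarrow> sum w Z \<le> sum w B')"
    using mle NZ_def by force
  have bBs: "basis indep Bs" and nzBs: "nonzero \<psi> Bs" and wBs: "sum w Bs = m"
    using Bs OPT_def NZ_def by auto
  show ?thesis
  proof (cases "card (B - Bs) \<le> 1")
    case True
    then show ?thesis using bBs nzBs good wBs by auto
  next
    case False
    show ?thesis
    proof (cases "nonzero \<psi> B")
      case True
      have "sum w B \<le> m" using assms(4) B1 NZ_def by auto
      then show ?thesis using True assms(3) good by auto
    next
      case False2: False
      then have psiB: "sum \<psi> B = 0" unfolding nonzero_def by simp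
      have iB: "indep B" and iBs: "indep Bs" using assms(3) bBs unfolding basis_def by auto
      have fB: "finite B" and fBs: "finite Bs" using m_indep_fin[OF M] iB iBs by auto
      have "\<not> Bs \<subseteq> B"
      proof
        assume "Bs \<subseteq> B"
        moreover have "card Bs = card B"
          using basis_card_le[OF M assms(3) iBs] basis_card_le[OF M bBs iB] by simp
        ultimately have "Bs = B" using fB card_subset_eq by blast
        then show False using False by simp
      qed
      then obtain x where x: "x \<in> Bs" "x \<notin> B" by blast
      obtain y where y: "y \<in> B - Bs" and bT: "basis indep (insert y (Bs - {x}))"
        and bB': "basis indep (insert x (B - {y}))"
        using sym_exchange[OF M bBs assms(3) x] by blast
      define T where "T = insert y (Bs - {x})"
      define B' where "B' = insert x (B - {y})"
      have sT: "\<And>f :: 'a \<Rightarrow> 'b::ab_group_add. sum f T = sum f Bs - f x + f y"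
        unfolding T_def using x y fBs by (simp add: sum_diff1)
      have sB': "\<And>f :: 'a \<Rightarrow> 'b::ab_group_add. sum f B' = sum f B - f y + f x"
        unfolding B'_def using x y fB by (simp add: sum_diff1)
      have wB': "sum w B \<le> sum w B'" using assms(4) bB' B'_def by blast
      have wT: "sum w B \<le> sum w T" using assms(4) bT T_def by blast
      show ?thesis
      proof (cases "nonzero \<psi> T")
        case True
        have "sum w T \<le> m" using sT[of w] sB'[of w] wB' wBs by linarith
        moreover have "T \<in> NZ" using True bT T_def NZ_def by blast
        ultimately have "OPT T" using mle OPT_def by force
        then have le: "card (B - Bs) \<le> card (B - T)" using Bsmin by blast
        have "B - T = (B - Bs) - {y}" unfolding T_def using x by blast
        moreover have "y \<in> B - Bs" using y by blast
        ultimately have "card (B - T) < card (B - Bs)" using fB by (metis card_Diff1_less finite_Diff)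
        then show ?thesis using le by simp
      next
        case False3: False
        have "sum \<psi> T = 0" using False3 nonzero_def by blast
        then have "\<psi> x - \<psi> y = sum \<psi> Bs" using sT[of \<psi>] by (simp add: algebra_simps)
        then have "sum \<psi> B' \<noteq> 0" using sB'[of \<psi>] psiB nzBs unfolding nonzero_def by (simp add: algebra_simps)
        then have nzB': "nonzero \<psi> B'" using nonzero_def by blast
        have "sum w B' \<le> m" using sT[of w] sB'[of w] wT wBs by linarith
        moreover have "B - B' = {y}" unfolding B'_def using x y by blast
        ultimately show ?thesis using bB' B'_def nzB' good by (intro exI[of _ B']) auto
      qed
    qed
  qed
qed

end
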